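(* If $n$ is a non-negative integer, then $$\sum_{k = 1}^n \sum_{j = 0}^{k - 1} (-1)^{k-j+1} F_{n-j} = F_{2(\lfloor (n-1)/2 \rfloor + 1)}$$ and $$\sum_{k = 1}^n \sum_{j = 0}^{k - 1} (-1)^{k-j+1} L_{n-j} = L_{2(\lfloor (n-1)/2 \rfloor + 1)} - 2.$$
   Context: $F_n$ are the Fibonacci numbers ($F_0=0$, $F_1=1$, $F_{n}=F_{n-1}+F_{n-2}$) and $L_n$ the Lucas numbers ($L_0=2$, $L_1=1$, $L_{n}=L_{n-1}+L_{n-2}$). Empty sums are zero. *)

theory Defs
  imports "HOL-Number_Theory.Fib"
begin

fun lucas :: "nat \<Rightarrow> nat" where
  "lucas 0 = 2"
| "lucas (Suc 0) = 1"
| "lucas (Suc (Suc n)) = lucas (Suc n) + lucas n"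

end

theory Submission
  imports Defs
begin

lemma alt_sum: "(\<Sum>k<m. (-1::int)^k) = (if odd m then 1 else 0)"
  by (induction m) auto

lemma gen_lemma:
  fixes a :: "nat \<Rightarrow> int"
  shows "(\<Sum>k<n. \<Sum>j<Suc k. (-1::int) ^ (Suc k - j + 1) * a (n - j))
         = (\<Sum>i=1..n. if odd i then a i else 0)"
proof (induction n)
  case 0
  then show ?case by simp
next
  case (Suc n)
  have "(\<Sum>k<Suc n. \<Sum>j<Suc k. (-1::int) ^ (Suc k - j + 1) * a (Suc n - j))
      = (\<Sum>k<Suc n. (-1::int)^(k+2) * a (Suc n)) +
        (\<Sum>k<Suc n. \<Sum>j<k. (-1::int) ^ (Suc k - Suc j + 1) * a (Suc n - Suc j))"
    by (simp add: sum.lessThan_Suc_shift sum.distrib del: sum.lessThan_Suc)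
  also have "(\<Sum>k<Suc n. \<Sum>j<k. (-1::int) ^ (Suc k - Suc j + 1) * a (Suc n - Suc j))
      = (\<Sum>k<n. \<Sum>j<Suc k. (-1::int) ^ (Suc k - j + 1) * a (n - j))"
    by (simp add: sum.lessThan_Suc_shift del: sum.lessThan_Suc)
  also have "(\<Sum>k<Suc n. (-1::int)^(k+2) * a (Suc n)) = (if odd (Suc n) then a (Suc n) else 0)"
    by (simp add: sum_distrib_right[symmetric] alt_sum del: sum.lessThan_Suc)
  finally show ?case using Suc by simp
qed

lemma conv:
  fixes a :: "nat \<Rightarrow> int"
  shows "(\<Sum>k=1..n. \<Sum>j=0..k-1. (-1::int) ^ (k - j + 1) * a (n - j))
       = (\<Sum>i=1..n. if odd i then a i else 0)"
proof -
  have "(\<Sum>k=1..n. \<Sum>j=0..k-1. (-1::int) ^ (k - j + 1) * a (n - j))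
      = (\<Sum>k<n. \<Sum>j<Suc k. (-1::int) ^ (Suc k - j + 1) * a (n - j))"
  proof -
    have "(\<Sum>k=1..n. \<Sum>j=0..k-1. (-1::int) ^ (k - j + 1) * a (n - j))
        = (\<Sum>k<n. \<Sum>j=0..Suc k-1. (-1::int) ^ (Suc k - j + 1) * a (n - j))"
      by (induction n) (auto simp: sum.atLeast1_atMost_eq)
    also have "\<dots> = (\<Sum>k<n. \<Sum>j<Suc k. (-1::int) ^ (Suc k - j + 1) * a (n - j))"
      by (simp add: atLeast0AtMost lessThan_Suc_atMost)
    finally show ?thesis .
  qed
  then show ?thesis using gen_lemma by simp
qed

lemma odd_fib: "(\<Sum>i=1..n. if odd i then int (fib i) else 0) = int (fib (2 * ((n+1) div 2)))"
proof (induction n)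
  case 0 then show ?case by simp
next
  case (Suc n)
  show ?case
  proof (cases "even n")
    case True
    then obtain m where m: "n = 2*m" by blast
    have "fib (2*m+2) = fib (2*m+1) + fib (2*m)" using fib.simps(3)[of "2*m"] by simp
    then show ?thesis using Suc m by simp
  next
    case False
    then obtain m where m: "n = 2*m+1" using oddE by blast
    have "(Suc (Suc n)) div 2 = m + 1" using m by simp
    moreover have "(Suc n) div 2 = m + 1" using m by simp
    ultimately show ?thesis using Suc m by simp
  qed
qed

lemma odd_lucas: "(\<Sum>i=1..n. if odd i then int (lucas i) else 0) = int (lucas (2 * ((n+1) div 2))) - 2"
proof (induction n)
  case 0 then show ?case by simp
next
  case (Suc n)
  show ?case
  proof (cases "even n")
    case True
    then obtain m where m: "n = 2*m" by blast
    have "lucas (2*m+2) = lucas (2*m+1) + lucas (2*m)"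
      using lucas.simps(3)[of "2*m"] by simp
    then show ?thesis using Suc m by simp
  next
    case False
    then obtain m where m: "n = 2*m+1" using oddE by blast
    have "(Suc (Suc n)) div 2 = m + 1" using m by simp
    moreover have "(Suc n) div 2 = m + 1" using m by simp
    ultimately show ?thesis using Suc m by simp
  qed
qed

lemma idx: "nat (2 * ((int n - 1) div 2 + 1)) = 2 * ((n+1) div 2)"
proof (cases n)
  case (Suc m)
  have "(int m) div 2 = int (m div 2)" by (simp add: zdiv_int)
  then show ?thesis using Suc by (simp add: nat_mult_distrib)
qed simp

theorem proposition4:
  fixes n :: nat
  shows "((\<Sum>k=1..n. \<Sum>j=0..k-1. (-1::int) ^ (k - j + 1) * int (fib (n - j)))
           = int (fib (nat (2 * ((int n - 1) div 2 + 1))))) \<and>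
         ((\<Sum>k=1..n. \<Sum>j=0..k-1. (-1::int) ^ (k - j + 1) * int (lucas (n - j)))
           = int (lucas (nat (2 * ((int n - 1) div 2 + 1)))) - 2)"
  using conv[where a="\<lambda>i. int (fib i)"] conv[where a="\<lambda>i. int (lucas i)"] odd_fib odd_lucas idx
  by simp

end
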